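(* Let $T$ be a rooted edge-weighted full binary tree with $n$ leaves, all root-to-leaf paths of weight $1$, whose topology is known, with experiment outcomes on all triples of leaves generated by the homogeneous noise model. Let $v$ be an internal vertex of $T$ and let $v_\ell$ be a heavy vertex on the rightmost path $P$ such that (i) $v_\ell$ is an ancestor of $v$, and (ii) the child subtree of $v_\ell$ not containing $v$ has $k\ge100$ leaves. For leaves $a,b$ in distinct child subtrees of $v$ and a leaf $c$ in the child subtree of $v_\ell$ not containing $v$, let $p$ be the probability that $Q(a,b,c)$ returns $(a,b)$ ($p$ does not depend on the choice of $a,b,c$). Then there is an algorithm that outputs an estimate $\hat p$ such that $\hat p$ is an unbiased estimator of $p$ and, with high probability, $|\hat p-p|=O\big(\sqrt{\log k/k}\big)$.
   Context: Distances $d$ between leaves are path weights. For each unordered triple of distinct leaves a single experiment $Q(a,b,c)$ returns one pair, independently across triples, with $\Pr[Q(a,b,c)=(a,b)]=\frac{d(a,c)+d(b,c)}{2(d(a,b)+d(b,c)+d(a,c))}$ (and symmetrically). $\mathsf{NL}(v)$ is the number of leaves in the subtree rooted at $v$. Children of each internal vertex are ordered so the right child $\mathsf{rc}$ and left child $\mathsf{lc}$ satisfy $\mathsf{NL}(\mathsf{rc})\ge\mathsf{NL}(\mathsf{lc})$; the rightmost path $P$ starts at the root and always goes to the right child. A vertex is heavy if $\mathsf{NL}(v)\ge\alpha n+1$, $\alpha=\frac16$. "With high probability" means probability $1-o(1)$. *)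

theory Defs
  imports "HOL-Probability.Probability"
begin

text \<open>Nd l wl r wr : left child l reached
 by an edge of weight wl, right child r reached by an edge of weight wr.
 Vertices are addressed by paths from the root (False = left, True = right).\<close>
datatype wtree = Lf | Nd wtree real wtree real

fun subtree_at :: "wtree \<Rightarrow> bool list \<Rightarrow> wtree option" where
  "subtree_at t [] = Some t"
| "subtree_at Lf (b # p) = None"
| "subtree_at (Nd l wl r wr) (b # p) = subtree_at (if b then r else l) p"

fun wdepth :: "wtree \<Rightarrow> bool list \<Rightarrow> real" where
  "wdepth t [] = 0"
| "wdepth Lf (b # p) = 0"
| "wdepth (Nd l wl r wr) (b # p) = (if b then wr + wdepth r p else wl + wdepth l p)"

fun lcp :: "'a list \<Rightarrow> 'a list \<Rightarrow> 'a list" where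
  "lcp (x # xs) (y # ys) = (if x = y then x # lcp xs ys else [])"
| "lcp _ _ = []"

definition tdist :: "wtree \<Rightarrow> bool list \<Rightarrow> bool list \<Rightarrow> real" where
  "tdist t x y = wdepth t x + wdepth t y - 2 * wdepth t (lcp x y)"

definition leaves :: "wtree \<Rightarrow> bool list set" where
  "leaves t = {p. subtree_at t p = Some Lf}"

definition leaves_below :: "wtree \<Rightarrow> bool list \<Rightarrow> bool list set" where
  "leaves_below t u = {p \<in> leaves t. \<exists>q. p = u @ q}"

definition NL :: "wtree \<Rightarrow> bool list \<Rightarrow> nat" where
  "NL t u = card (leaves_below t u)"

definition internal :: "wtree \<Rightarrow> bool list \<Rightarrow> bool" where
  "internal t u = (\<exists>l wl r wr. subtree_at t u = Some (Nd l wl r wr))"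

fun pos_weights :: "wtree \<Rightarrow> bool" where
  "pos_weights Lf = True"
| "pos_weights (Nd l wl r wr) = (wl > 0 \<and> wr > 0 \<and> pos_weights l \<and> pos_weights r)"

fun nlv :: "wtree \<Rightarrow> nat" where
  "nlv Lf = 1"
| "nlv (Nd l wl r wr) = nlv l + nlv r"

fun right_heavy :: "wtree \<Rightarrow> bool" where
  "right_heavy Lf = True"
| "right_heavy (Nd l wl r wr) = (nlv l \<le> nlv r \<and> right_heavy l \<and> right_heavy r)"

fun shape :: "wtree \<Rightarrow> wtree" where
  "shape Lf = Lf"
| "shape (Nd l wl r wr) = Nd (shape l) 0 (shape r) 0"

definition ultrametric1 :: "wtree \<Rightarrow> bool" where
  "ultrametric1 t = (\<forall>p \<in> leaves t. wdepth t p = 1)"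

definition on_rightmost_path :: "bool list \<Rightarrow> bool" where
  "on_rightmost_path u = (\<exists>m. u = replicate m True)"

text \<open>heavy: NL(u) \<ge> alpha n + 1 with alpha = 1/6\<close>
definition heavy :: "wtree \<Rightarrow> bool list \<Rightarrow> bool" where
  "heavy t u = (real (NL t u) \<ge> real (card (leaves t)) / 6 + 1)"

definition triples :: "wtree \<Rightarrow> bool list set set" where
  "triples t = {S. S \<subseteq> leaves t \<and> card S = 3}"

text \<open>Probability that the experiment on triple S returns the pair P:
  for P = {a,b}, S = {a,b,c}: (d(a,c)+d(b,c)) / (2(d(a,b)+d(b,c)+d(a,c))).\<close>
definition qweight :: "wtree \<Rightarrow> bool list set \<Rightarrow> bool list set \<Rightarrow> real" where
  "qweight t S P = (if P \<subseteq> S \<and> card P = 2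
     then (\<Sum>x\<in>P. tdist t x (the_elem (S - P))) / (\<Sum>x\<in>S. \<Sum>y\<in>S. tdist t x y)
     else 0)"

definition Q_pmf :: "wtree \<Rightarrow> bool list set \<Rightarrow> bool list set pmf" where
  "Q_pmf t S = embed_pmf (qweight t S)"

definition outcomes :: "wtree \<Rightarrow> (bool list set \<Rightarrow> bool list set) pmf" where
  "outcomes t = Pi_pmf (triples t) {} (Q_pmf t)"

end

theory Submission
  imports Defs "HOL-Real_Asymp.Real_Asymp"
begin
lemma subtree_at_append:
  "subtree_at t (u @ q) = (case subtree_at t u of None \<Rightarrow> None | Some s \<Rightarrow> subtree_at s q)"
  by (induction t u rule: subtree_at.induct) auto

lemma wdepth_append:
  "subtree_at t u = Some s \<Longrightarrow> wdepth t (u @ q) = wdepth t u + wdepth s q"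
  by (induction t u rule: subtree_at.induct) (auto split: if_splits)

lemma pos_weights_sub:
  "pos_weights t \<Longrightarrow> subtree_at t u = Some s \<Longrightarrow> pos_weights s"
  by (induction t u rule: subtree_at.induct) (auto split: if_splits)

lemma wdepth_nonneg: "pos_weights s \<Longrightarrow> wdepth s q \<ge> 0"
  by (induction s q rule: wdepth.induct) auto

lemma wdepth_pos: "pos_weights s \<Longrightarrow> s \<noteq> Lf \<Longrightarrow> q \<noteq> [] \<Longrightarrow> wdepth s q > 0"
proof (induction s q rule: wdepth.induct)
  case (3 l wl r wr b p)
  then show ?case using wdepth_nonneg[of l p] wdepth_nonneg[of r p] by auto
qed auto

lemma leaves_Lf: "leaves Lf = {[]}"
  unfolding leaves_def by (auto elim: subtree_at.elims)

lemma leaves_Nd: "leaves (Nd l wl r wr) = (#) False ` leaves l \<union> (#) True ` leaves r"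
  unfolding leaves_def
  apply (auto)
  subgoal for x by (cases x) (auto split: if_splits)
  done

lemma finite_leaves: "finite (leaves t)"
  by (induction t) (auto simp: leaves_Lf leaves_Nd)

lemma subtree_shape: "subtree_at (shape t) p = map_option shape (subtree_at t p)"
  by (induction t p rule: subtree_at.induct) auto

lemma shape_Lf: "shape s = Lf \<longleftrightarrow> s = Lf"
  by (cases s) auto

lemma leaves_shape: "leaves (shape t) = leaves t"
  unfolding leaves_def by (auto simp: subtree_shape shape_Lf)

lemma leaves_below_shape: "leaves_below (shape t) u = leaves_below t u"
  unfolding leaves_below_def by (simp add: leaves_shape)

lemma lcp_append: "lcp (u @ s) (u @ s') = u @ lcp s s'"
  by (induction u) auto

lemma lcp_diff: "b \<noteq> c \<Longrightarrow> lcp (b # s) (c # s') = []"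
  by simp

lemma lcp_self: "lcp x x = x"
  by (induction x) auto

lemma tdist_self: "tdist t x x = 0"
  by (simp add: tdist_def lcp_self)


definition pv :: "wtree \<Rightarrow> bool list \<Rightarrow> bool list \<Rightarrow> real" where
  "pv t v vl = (1 - wdepth t vl) / ((1 - wdepth t v) + 2 * (1 - wdepth t vl))"

lemma geom:
  assumes pw: "pos_weights t" and um: "ultrametric1 t" and iv: "internal t v"
    and vv: "v = vl @ x # rest"
    and a: "a \<in> leaves_below t (v @ [y])" and b: "b \<in> leaves_below t (v @ [\<not> y])"
    and c: "c \<in> leaves_below t (vl @ [\<not> x])"
  shows "tdist t a b = 2 - 2 * wdepth t v" "tdist t b a = 2 - 2 * wdepth t v"
    "tdist t a c = 2 - 2 * wdepth t vl" "tdist t c a = 2 - 2 * wdepth t vl"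
    "tdist t b c = 2 - 2 * wdepth t vl" "tdist t c b = 2 - 2 * wdepth t vl"
    "a \<noteq> b" "a \<noteq> c" "b \<noteq> c" "wdepth t v < 1" "wdepth t vl \<le> wdepth t v"
    "a \<in> leaves t" "b \<in> leaves t" "c \<in> leaves t"
proof -
  obtain qa where qa: "a = v @ y # qa" and al: "a \<in> leaves t"
    using a unfolding leaves_below_def by auto
  obtain qb where qb: "b = v @ (\<not> y) # qb" and bl: "b \<in> leaves t"
    using b unfolding leaves_below_def by auto
  obtain qc where qc: "c = vl @ (\<not> x) # qc" and cl: "c \<in> leaves t"
    using c unfolding leaves_below_def by auto
  have wa: "wdepth t a = 1" "wdepth t b = 1" "wdepth t c = 1"
    using um al bl cl unfolding ultrametric1_def by auto
  have lab: "lcp a b = v" "lcp b a = v" using qa qb by (simp_all add: lcp_append)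
  have lac: "lcp a c = vl" "lcp c a = vl" "lcp b c = vl" "lcp c b = vl"
    using qa qb qc vv by (simp_all add: lcp_append)
  show "tdist t a b = 2 - 2 * wdepth t v" "tdist t b a = 2 - 2 * wdepth t v"
    "tdist t a c = 2 - 2 * wdepth t vl" "tdist t c a = 2 - 2 * wdepth t vl"
    "tdist t b c = 2 - 2 * wdepth t vl" "tdist t c b = 2 - 2 * wdepth t vl"
    using wa lab lac by (simp_all add: tdist_def)
  show "a \<noteq> b" using qa qb by auto
  show "a \<noteq> c" "b \<noteq> c" using qa qb qc vv by auto
  show "a \<in> leaves t" "b \<in> leaves t" "c \<in> leaves t" by fact+
  obtain l wl r wr where sv: "subtree_at t v = Some (Nd l wl r wr)"
    using iv unfolding internal_def by auto
  have "pos_weights (Nd l wl r wr)" using pos_weights_sub[OF pw sv] .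
  hence "wdepth (Nd l wl r wr) (y # qa) > 0" by (intro wdepth_pos) auto
  moreover have "wdepth t a = wdepth t v + wdepth (Nd l wl r wr) (y # qa)"
    using wdepth_append[OF sv] qa by simp
  ultimately show "wdepth t v < 1" using wa by simp
  obtain s where svl: "subtree_at t vl = Some s"
    using sv vv subtree_at_append[of t vl "x # rest"] by (auto split: option.splits)
  have "wdepth t v = wdepth t vl + wdepth s (x # rest)"
    using wdepth_append[OF svl] vv by simp
  moreover have "wdepth s (x # rest) \<ge> 0"
    using wdepth_nonneg pos_weights_sub[OF pw svl] by blast
  ultimately show "wdepth t vl \<le> wdepth t v" by simp
qed


lemma triple_prob:
  assumes pw: "pos_weights t" and um: "ultrametric1 t" and iv: "internal t v"
    and vv: "v = vl @ x # rest"
    and a: "a \<in> leaves_below t (v @ [y])" and b: "b \<in> leaves_below t (v @ [\<not> y])"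
    and c: "c \<in> leaves_below t (vl @ [\<not> x])"
  shows "measure_pmf.prob (outcomes t) {\<omega>. \<omega> {a, b, c} = {a, b}} = pv t v vl"
    and "{a, b, c} \<in> triples t"
proof -
  note g = geom[OF assms]
  define D where "D = 2 - 2 * wdepth t v"
  define E where "E = 2 - 2 * wdepth t vl"
  have D: "D > 0" and DE: "D \<le> E" using g(10,11) by (auto simp: D_def E_def)
  define S where "S = {a, b, c}"
  have den: "(\<Sum>x\<in>S. \<Sum>y\<in>S. tdist t x y) = 2 * D + 4 * E"
    using g(1-9) unfolding S_def D_def E_def by (simp add: tdist_self)
  have S3: "card S = 3" using g(7-9) unfolding S_def by simp
  have qw: "qweight t S P = (if P = {a, b} then 2 * E / (2 * D + 4 * E)
             else if P = {a, c} \<or> P = {b, c} then (D + E) / (2 * D + 4 * E) else 0)" for P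
  proof (cases "P \<subseteq> S \<and> card P = 2")
    case True
    then obtain u w where P: "P = {u, w}" "u \<noteq> w" by (auto simp: card_2_iff)
    have "P = {a, b} \<or> P = {a, c} \<or> P = {b, c}"
      using True P g(7-9) unfolding S_def by auto
    moreover have "S - {a, b} = {c}" "S - {a, c} = {b}" "S - {b, c} = {a}"
      using g(7-9) unfolding S_def by auto
    moreover have "{a, b} \<noteq> {a, c}" "{a, b} \<noteq> {b, c}" "{a,c} \<noteq> {b, c}"
      using g(7-9) by (auto simp: doubleton_eq_iff)
    ultimately show ?thesis
      using True den g(1-9) g(7-9) unfolding qweight_def D_def E_def
      by (elim disjE) (simp_all add: doubleton_eq_iff)
  next
    case False
    hence "P \<noteq> {a, b}" "P \<noteq> {a, c}" "P \<noteq> {b, c}"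
      using g(7-9) unfolding S_def by auto
    moreover have "qweight t S P = 0" unfolding qweight_def using False by (simp only: if_False)
    ultimately show ?thesis by simp
  qed
  have nn: "0 \<le> qweight t S P" for P
    using D DE by (simp add: qw)
  have pairs: "{a, b} \<noteq> {a, c}" "{a, b} \<noteq> {b, c}" "{a,c} \<noteq> {b, c}"
      using g(7-9) by (auto simp: doubleton_eq_iff)
  have "(\<integral>\<^sup>+P. ennreal (qweight t S P) \<partial>count_space UNIV)
        = (\<Sum>P\<in>{{a, b}, {a, c}, {b, c}}. ennreal (qweight t S P))"
    by (rule nn_integral_count_space') (auto simp: qw)
  also have "\<dots> = ennreal (\<Sum>P\<in>{{a, b}, {a, c}, {b, c}}. qweight t S P)"
    using nn by (simp add: sum_ennreal)
  also have "(\<Sum>P\<in>{{a, b}, {a, c}, {b, c}}. qweight t S P) = 1"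
  proof -
    have dp: "2 * D + 4 * E \<noteq> 0" using D DE by simp
    have "(\<Sum>P\<in>{{a, b}, {a, c}, {b, c}}. qweight t S P)
       = 2 * E / (2 * D + 4 * E) + ((D + E) / (2 * D + 4 * E) + (D + E) / (2 * D + 4 * E))"
      using pairs by (simp add: qw)
    also have "\<dots> = (2 * E + ((D + E) + (D + E))) / (2 * D + 4 * E)"
      by (simp only: add_divide_distrib)
    also have "2 * E + ((D + E) + (D + E)) = 2 * D + 4 * E" by simp
    also have "(2 * D + 4 * E) / (2 * D + 4 * E) = 1" using dp by simp
    finally show ?thesis .
  qed
  finally have one: "(\<integral>\<^sup>+P. ennreal (qweight t S P) \<partial>count_space UNIV) = 1" by simp
  have Striple: "S \<in> triples t"
    using S3 g(12-14) unfolding triples_def S_def by auto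
  then show "{a, b, c} \<in> triples t" by (simp add: S_def)
  have fin: "finite (triples t)"
    unfolding triples_def using finite_leaves[of t] by (simp add: finite_Pow_iff)
  have "measure_pmf.prob (outcomes t) {\<omega>. \<omega> S = {a, b}}
      = measure_pmf.prob (map_pmf (\<lambda>f. f S) (outcomes t)) {{a, b}}"
    by (simp add: vimage_def)
  also have "map_pmf (\<lambda>f. f S) (outcomes t) = Q_pmf t S"
    unfolding outcomes_def by (subst Pi_pmf_component[OF fin]) (simp add: Striple)
  also have "measure_pmf.prob (Q_pmf t S) {{a, b}} = pmf (Q_pmf t S) {a, b}"
    by (simp add: measure_pmf_single)
  also have "\<dots> = qweight t S {a, b}"
    unfolding Q_pmf_def by (rule pmf_embed_pmf[OF nn one])
  also have "\<dots> = pv t v vl"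
    using D DE by (simp add: qw pv_def D_def E_def field_simps)
  finally show "measure_pmf.prob (outcomes t) {\<omega>. \<omega> {a, b, c} = {a, b}} = pv t v vl"
    by (simp add: S_def)
qed

definition est0 :: "wtree \<Rightarrow> bool list \<Rightarrow> bool list \<Rightarrow> (bool list set \<Rightarrow> bool list set) \<Rightarrow> real" where
  "est0 t0 v vl \<omega> = (let x = v ! length vl;
      a0 = (SOME a. a \<in> leaves_below t0 (v @ [False]));
      b0 = (SOME b. b \<in> leaves_below t0 (v @ [True]));
      TS = (\<lambda>c. {a0, b0, c}) ` leaves_below t0 (vl @ [\<not> x])
    in (\<Sum>S\<in>TS. indicator {\<omega>. \<omega> S = {a0, b0}} \<omega>) / real (card TS))"

lemma main:
  assumes pw: "pos_weights t" and um: "ultrametric1 t" and iv: "internal t v"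
    and vv: "v = vl @ x # rest"
    and a: "a \<in> leaves_below t (v @ [y])" and b: "b \<in> leaves_below t (v @ [\<not> y])"
    and c: "c \<in> leaves_below t (vl @ [\<not> x])"
    and k: "NL t (vl @ [\<not> x]) \<ge> 100"
  defines "k \<equiv> NL t (vl @ [\<not> x])"
  defines "p \<equiv> measure_pmf.prob (outcomes t) {\<omega>. \<omega> {a, b, c} = {a, b}}"
  shows "measure_pmf.expectation (outcomes t) (est0 (shape t) v vl) = p"
    "measure_pmf.prob (outcomes t)
       {\<omega>. \<bar>est0 (shape t) v vl \<omega> - p\<bar> > 1 * sqrt (ln (real k) / real k)} \<le> 2 / (real k)^2"
proof -
  have p: "p = pv t v vl" unfolding p_def by (rule triple_prob(1)[OF assms(1-7)])
  have xv: "v ! length vl = x" using vv by simp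
  define a0 where "a0 = (SOME a. a \<in> leaves_below t (v @ [False]))"
  define b0 where "b0 = (SOME b. b \<in> leaves_below t (v @ [True]))"
  define Cs where "Cs = leaves_below t (vl @ [\<not> x])"
  define T where "T = (\<lambda>c. {a0, b0, c})"
  define TS where "TS = T ` Cs"
  define P0 where "P0 = {a0, b0}"
  define X :: "bool list set \<Rightarrow> (bool list set \<Rightarrow> bool list set) \<Rightarrow> real"
    where "X = (\<lambda>S \<omega>. indicator {\<omega>. \<omega> S = P0} \<omega>)"
  have est: "est0 (shape t) v vl = (\<lambda>\<omega>. (\<Sum>S\<in>TS. X S \<omega>) / real (card TS))"
    unfolding est0_def leaves_below_shape xv Let_def a0_def[symmetric] b0_def[symmetric]
      Cs_def[symmetric] TS_def T_def X_def P0_def by simp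
  have "\<exists>a. a \<in> leaves_below t (v @ [False])" using a b by (cases y) auto
  hence a0: "a0 \<in> leaves_below t (v @ [False])" unfolding a0_def by (rule someI_ex)
  have "\<exists>a. a \<in> leaves_below t (v @ [True])" using a b by (cases y) auto
  hence b0: "b0 \<in> leaves_below t (v @ [\<not> False])" unfolding b0_def by (simp add: someI_ex[where P="\<lambda>b. b \<in> leaves_below t (v @ [True])"])
  have inS: "S \<in> triples t" and prS: "measure_pmf.prob (outcomes t) {\<omega>. \<omega> S = P0} = pv t v vl"
    if ST: "S \<in> TS" for S
  proof -
    obtain c' where c': "c' \<in> Cs" "S = {a0, b0, c'}" using ST unfolding TS_def T_def by auto
    show "S \<in> triples t" using triple_prob(2)[OF pw um iv vv a0 b0, of c'] c' Cs_def by simp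
    show "measure_pmf.prob (outcomes t) {\<omega>. \<omega> S = P0} = pv t v vl"
      using triple_prob(1)[OF pw um iv vv a0 b0, of c'] c' Cs_def P0_def by simp
  qed
  have injT: "inj_on T Cs"
  proof
    fix c1 c2 assume c1: "c1 \<in> Cs" and c2: "c2 \<in> Cs" and e: "T c1 = T c2"
    have "c1 \<noteq> a0" "c1 \<noteq> b0" using geom(8,9)[OF pw um iv vv a0 b0, of c1] c1 Cs_def by auto
    then show "c1 = c2" using e unfolding T_def by auto
  qed
  have finC: "finite Cs" unfolding Cs_def leaves_below_def
    using finite_leaves[of t] by simp
  have cardTS: "card TS = k" unfolding TS_def k_def NL_def Cs_def[symmetric]
    using card_image[OF injT] .
  have kpos: "real k \<ge> 100" using k unfolding k_def by simp
  have finTS: "finite TS" unfolding TS_def using finC by simp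
  have EX: "measure_pmf.expectation (outcomes t) (X S) = pv t v vl" if "S \<in> TS" for S
    using prS[OF that] unfolding X_def by simp
  have intX: "integrable (measure_pmf (outcomes t)) (X S)" for S
    unfolding X_def by (rule integrable_real_indicator) (simp_all add: measure_pmf.emeasure_eq_measure)
  show "measure_pmf.expectation (outcomes t) (est0 (shape t) v vl) = p"
    unfolding est p using kpos
    by (simp add: integral_sum intX EX cardTS)
  have finT: "finite (triples t)"
    unfolding triples_def using finite_leaves[of t] by (simp add: finite_Pow_iff)
  have ind0: "prob_space.indep_vars (measure_pmf (outcomes t)) (\<lambda>_. count_space UNIV) (\<lambda>S f. f S) TS"
    using prob_space.indep_vars_subset[OF measure_pmf.prob_space_axioms
        indep_vars_Pi_pmf[OF finT, of "{}" "Q_pmf t"]] inS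
    unfolding outcomes_def by blast
  have ind: "prob_space.indep_vars (measure_pmf (outcomes t)) (\<lambda>_. borel) X TS"
  proof -
    have "prob_space.indep_vars (measure_pmf (outcomes t)) (\<lambda>_. borel)
            (\<lambda>S \<omega>. (\<lambda>z. indicator {P0} z :: real) (\<omega> S)) TS"
      by (rule prob_space.indep_vars_compose2[OF measure_pmf.prob_space_axioms ind0]) simp
    moreover have "(\<lambda>S \<omega>. (\<lambda>z. indicator {P0} z :: real) (\<omega> S)) = X"
      unfolding X_def by (auto simp: indicator_def fun_eq_iff)
    ultimately show ?thesis by simp
  qed
  interpret H: Hoeffding_ineq "measure_pmf (outcomes t)" TS X "\<lambda>_. 0" "\<lambda>_. 1"
      "(\<Sum>S\<in>TS. measure_pmf.expectation (outcomes t) (X S))"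
  proof unfold_locales
    show "finite TS" by (rule finTS)
    show "prob_space.indep_vars (measure_pmf (outcomes t)) (\<lambda>_. borel) X TS" by (rule ind)
    fix S show "AE x in measure_pmf (outcomes t). X S x \<in> {0..1}"
      unfolding X_def by (simp add: indicator_def)
  qed
  define e where "e = sqrt (ln (real k) / real k)"
  have lnpos: "ln (real k) > 0" using kpos by simp
  have e0: "e \<ge> 0" unfolding e_def using kpos lnpos by simp
  have e2: "e^2 = ln (real k) / real k" unfolding e_def using kpos lnpos by simp
  have mu: "(\<Sum>S\<in>TS. measure_pmf.expectation (outcomes t) (X S)) = real k * pv t v vl"
    using EX cardTS by simp
  have sub: "{\<omega>. \<bar>est0 (shape t) v vl \<omega> - p\<bar> > 1 * e} \<subseteq>
      {\<omega> \<in> space (measure_pmf (outcomes t)).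
        \<bar>(\<Sum>S\<in>TS. X S \<omega>) - (\<Sum>S\<in>TS. measure_pmf.expectation (outcomes t) (X S))\<bar> \<ge> real k * e}"
  proof
    fix \<omega> assume "\<omega> \<in> {\<omega>. \<bar>est0 (shape t) v vl \<omega> - p\<bar> > 1 * e}"
    hence h: "\<bar>(\<Sum>S\<in>TS. X S \<omega>) / real k - pv t v vl\<bar> > e" unfolding est p cardTS by simp
    have "(\<Sum>S\<in>TS. X S \<omega>) / real k - pv t v vl = ((\<Sum>S\<in>TS. X S \<omega>) - real k * pv t v vl) / real k"
      using kpos by (simp add: field_simps)
    with h have "\<bar>(\<Sum>S\<in>TS. X S \<omega>) - real k * pv t v vl\<bar> / real k > e"
      by simp
    hence "\<bar>(\<Sum>S\<in>TS. X S \<omega>) - real k * pv t v vl\<bar> > real k * e"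
      using kpos by (simp add: field_simps)
    thus "\<omega> \<in> {\<omega> \<in> space (measure_pmf (outcomes t)).
        \<bar>(\<Sum>S\<in>TS. X S \<omega>) - (\<Sum>S\<in>TS. measure_pmf.expectation (outcomes t) (X S))\<bar> \<ge> real k * e}"
      unfolding mu by simp
  qed
  have "measure_pmf.prob (outcomes t) {\<omega>. \<bar>est0 (shape t) v vl \<omega> - p\<bar> > 1 * e}
     \<le> measure_pmf.prob (outcomes t) {\<omega> \<in> space (measure_pmf (outcomes t)).
        \<bar>(\<Sum>S\<in>TS. X S \<omega>) - (\<Sum>S\<in>TS. measure_pmf.expectation (outcomes t) (X S))\<bar> \<ge> real k * e}"
    by (rule measure_pmf.finite_measure_mono[OF sub]) simp
  also have "\<dots> \<le> 2 * exp (-2 * (real k * e)\<^sup>2 / (\<Sum>S\<in>TS. (1 - 0)\<^sup>2))"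
    by (rule H.Hoeffding_ineq_abs_ge) (use kpos e0 cardTS finTS in auto)
  also have "-2 * (real k * e)\<^sup>2 / (\<Sum>S\<in>TS. (1 - 0)\<^sup>2) = - (2 * ln (real k))"
  proof -
    have "e * e = ln (real k) / real k" using e2 by (simp add: power2_eq_square)
    hence "real k * e * (real k * e) = real k * ln (real k)" using kpos by (simp add: field_simps)
    thus ?thesis using kpos cardTS by (simp add: power2_eq_square)
  qed
  also have "exp (- (2 * ln (real k))) = 1 / (real k)^2"
  proof -
    have "2 * ln (real k) = ln ((real k)^2)" using kpos by (simp add: ln_realpow)
    thus ?thesis using kpos by (simp add: exp_minus inverse_eq_divide)
  qed
  finally show "measure_pmf.prob (outcomes t)
       {\<omega>. \<bar>est0 (shape t) v vl \<omega> - p\<bar> > 1 * sqrt (ln (real k) / real k)} \<le> 2 / (real k)^2"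
    unfolding e_def by simp
qed

theorem lemma7:
  "\<exists>(est :: wtree \<Rightarrow> bool list \<Rightarrow> bool list \<Rightarrow> (bool list set \<Rightarrow> bool list set) \<Rightarrow> real)
      (C :: real) (\<delta> :: nat \<Rightarrow> real).
     C > 0 \<and> (\<delta> \<longlonglongrightarrow> 0) \<and>
     (\<forall>t v vl x rest.
        pos_weights t \<and> ultrametric1 t \<and> right_heavy t \<and>
        internal t v \<and> on_rightmost_path vl \<and> heavy t vl \<and>
        v = vl @ x # rest \<and> NL t (vl @ [\<not> x]) \<ge> 100 \<longrightarrow>
        (let k = NL t (vl @ [\<not> x]);
             phat = est (shape t) v vl
         in (\<forall>a b c y.
               a \<in> leaves_below t (v @ [y]) \<and> b \<in> leaves_below t (v @ [\<not> y]) \<and>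
               c \<in> leaves_below t (vl @ [\<not> x]) \<longrightarrow>
               (let p = measure_pmf.prob (outcomes t) {\<omega>. \<omega> {a, b, c} = {a, b}}
                in measure_pmf.expectation (outcomes t) phat = p \<and>
                   measure_pmf.prob (outcomes t)
                     {\<omega>. \<bar>phat \<omega> - p\<bar> > C * sqrt (ln (real k) / real k)} \<le> \<delta> k))))"
proof (intro exI conjI allI impI)
  show "(1::real) > 0" by simp
  show "(\<lambda>k::nat. 2 / (real k)^2) \<longlonglongrightarrow> 0" by real_asymp
  fix t v vl x rest
  assume h: "pos_weights t \<and> ultrametric1 t \<and> right_heavy t \<and>
        internal t v \<and> on_rightmost_path vl \<and> heavy t vl \<and>
        v = vl @ x # rest \<and> NL t (vl @ [\<not> x]) \<ge> 100"
  show "let k = NL t (vl @ [\<not> x]); phat = est0 (shape t) v vl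
         in (\<forall>a b c y.
               a \<in> leaves_below t (v @ [y]) \<and> b \<in> leaves_below t (v @ [\<not> y]) \<and>
               c \<in> leaves_below t (vl @ [\<not> x]) \<longrightarrow>
               (let p = measure_pmf.prob (outcomes t) {\<omega>. \<omega> {a, b, c} = {a, b}}
                in measure_pmf.expectation (outcomes t) phat = p \<and>
                   measure_pmf.prob (outcomes t)
                     {\<omega>. \<bar>phat \<omega> - p\<bar> > 1 * sqrt (ln (real k) / real k)}
                     \<le> (\<lambda>k::nat. 2 / (real k)^2) k))"
    unfolding Let_def
    apply (intro allI impI)
    subgoal for a b c y
    proof -
      assume abc: "a \<in> leaves_below t (v @ [y]) \<and> b \<in> leaves_below t (v @ [\<not> y]) \<and>
               c \<in> leaves_below t (vl @ [\<not> x])"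
      have hh: "pos_weights t" "ultrametric1 t" "internal t v" "v = vl @ x # rest"
        "NL t (vl @ [\<not> x]) \<ge> 100" using h by auto
      note m = main[OF hh(1-4), of a y b c, OF _ _ _ hh(5)]
      show ?thesis using m abc by simp
    qed
    done
qed

end
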